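(* Let $\ell\in\mathbb{R}$ and $p\in(0,1)$, and let $\tilde X$ be drawn with probability $p$ from the law of $X\sim N(0,1)$ conditioned on $X>\ell$, and with probability $1-p$ from the law of $X\sim N(0,1)$ conditioned on $X\le\ell$. Then for every $t>0$, $\Pr[|\tilde X|>t]\le2\exp(-t^2/K_1^2)$ where $K_1=\max\{\sqrt{20},|\ell|\sqrt{10}\}$. In particular, $\|\tilde X\|_{\psi_2}=O(\max\{1,|\ell|\})$.
   Context: The subgaussian norm is $\|X\|_{\psi_2}:=\inf\{t>0:\mathbb{E}[\exp(X^2/t^2)]\le2\}$. *)

theory Defs
  imports "HOL-Probability.Probability"
begin

definition std_normal_measure :: "real measure" where
  "std_normal_measure = density lborel (\<lambda>x. ennreal (std_normal_density x))"

definition trunc_mix_density :: "real \<Rightarrow> real \<Rightarrow> real \<Rightarrow> real" where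
  "trunc_mix_density l p x =
     (if l < x then p * std_normal_density x / measure std_normal_measure {l<..}
      else (1 - p) * std_normal_density x / measure std_normal_measure {..l})"

definition trunc_mix_measure :: "real \<Rightarrow> real \<Rightarrow> real measure" where
  "trunc_mix_measure l p = density lborel (\<lambda>x. ennreal (trunc_mix_density l p x))"

definition psi2_norm :: "real measure \<Rightarrow> real" where
  "psi2_norm M = Inf {t::real. t > 0 \<and> (\<integral>\<^sup>+ x. ennreal (exp (x\<^sup>2 / t\<^sup>2)) \<partial>M) \<le> 2}"

end

theory Submission imports Defs begin

lemma snm_prob: "prob_space std_normal_measure"
  unfolding std_normal_measure_def by (rule prob_space_normal_density) simp

lemma gauss_nn:
  assumes "\<sigma> > 0"
  shows "(\<integral>\<^sup>+x. ennreal (exp (- x\<^sup>2 / (2*\<sigma>\<^sup>2))) \<partial>lborel) = ennreal (sqrt (2*pi*\<sigma>\<^sup>2))"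
proof -
  have 1: "(\<integral>\<^sup>+x. ennreal (normal_density 0 \<sigma> x) \<partial>lborel) = 1"
    using prob_space.emeasure_space_1[OF prob_space_normal_density[OF assms, of 0]]
    by (simp add: emeasure_density)
  have pos: "sqrt (2*pi*\<sigma>\<^sup>2) > 0" using assms by simp
  have "\<And>x. ennreal (exp (-x\<^sup>2/(2*\<sigma>\<^sup>2))) = ennreal (sqrt(2*pi*\<sigma>\<^sup>2)) * ennreal (normal_density 0 \<sigma> x)"
    using pos assms by (simp add: normal_density_def ennreal_mult[symmetric])
  then have "(\<integral>\<^sup>+x. ennreal (exp (- x\<^sup>2 / (2*\<sigma>\<^sup>2))) \<partial>lborel)
     = (\<integral>\<^sup>+x. ennreal (sqrt(2*pi*\<sigma>\<^sup>2)) * ennreal (normal_density 0 \<sigma> x) \<partial>lborel)"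
    by simp
  also have "\<dots> = ennreal (sqrt(2*pi*\<sigma>\<^sup>2))"
    by (subst nn_integral_cmult) (auto simp: 1)
  finally show ?thesis .
qed

lemma snm_lower:
  assumes "{c<..c+1} \<subseteq> A" "A \<in> sets borel" "\<And>x. x \<in> {c<..c+1} \<Longrightarrow> \<bar>x\<bar> \<le> b"
  shows "std_normal_density b \<le> measure std_normal_measure A"
proof -
  interpret S: prob_space std_normal_measure by (rule snm_prob)
  have "emeasure lborel {c<..c+1} = 1" by simp
  then have "ennreal (std_normal_density b) = ennreal (std_normal_density b) * emeasure lborel {c<..c+1}"
    by simp
  also have "\<dots> = (\<integral>\<^sup>+x. ennreal (std_normal_density b) * indicator {c<..c+1} x \<partial>lborel)"
    by (rule nn_integral_cmult_indicator[symmetric]) simp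
  also have "\<dots> \<le> (\<integral>\<^sup>+x. ennreal (std_normal_density x) * indicator A x \<partial>lborel)"
  proof (rule nn_integral_mono)
    fix x
    show "ennreal (std_normal_density b) * indicator {c<..c+1} x \<le> ennreal (std_normal_density x) * indicator A x"
    proof (cases "x \<in> {c<..c+1}")
      case True
      have "\<bar>x\<bar> \<le> b" using assms(3) True .
      then have "\<bar>x\<bar>\<^sup>2 \<le> b\<^sup>2" by (intro power_mono) simp_all
      then have "x\<^sup>2 \<le> b\<^sup>2" by simp
      then have "exp (- b\<^sup>2 / 2) \<le> exp (- x\<^sup>2 / 2)" by simp
      then have "std_normal_density b \<le> std_normal_density x"
        unfolding std_normal_density_def by (intro mult_left_mono) simp_all
      then have "ennreal (std_normal_density b) \<le> ennreal (std_normal_density x)" by (rule ennreal_leI)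
      moreover have "x \<in> A" using True assms(1) by blast
      ultimately show ?thesis using True by simp
    next
      case False
      then show ?thesis by simp
    qed
  qed
  also have "\<dots> = emeasure std_normal_measure A"
    unfolding std_normal_measure_def using assms(2) by (simp add: emeasure_density)
  also have "\<dots> = ennreal (measure std_normal_measure A)"
    by (rule S.emeasure_eq_measure)
  finally have "ennreal (std_normal_density b) \<le> ennreal (measure std_normal_measure A)" .
  then show ?thesis by (subst (asm) ennreal_le_iff) simp_all
qed

lemma Q_lower: "std_normal_density (\<bar>l\<bar>+1) \<le> measure std_normal_measure {l<..}"
  by (rule snm_lower[where c="max l 0"]) auto

lemma P_lower: "std_normal_density (\<bar>l\<bar>+1) \<le> measure std_normal_measure {..l}"
  by (rule snm_lower[where c="min l 0 - 1"]) auto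

lemma tmd_meas[measurable]: "trunc_mix_density l p \<in> borel_measurable borel"
  unfolding trunc_mix_density_def by measurable

lemma snm_pos: "0 < std_normal_density (\<bar>l\<bar>+1)"
  by (simp add: std_normal_density_def)

lemma tmd_nonneg: "0 < p \<Longrightarrow> p < 1 \<Longrightarrow> 0 \<le> trunc_mix_density l p x"
  unfolding trunc_mix_density_def by simp

lemma tmd_bound:
  assumes "0 < p" "p < 1"
  shows "trunc_mix_density l p x \<le> exp (((\<bar>l\<bar>+1)\<^sup>2 - x\<^sup>2)/2)"
proof -
  define b where "b = \<bar>l\<bar>+1"
  have pb: "0 < std_normal_density b" unfolding b_def by (rule snm_pos)
  have r: "std_normal_density x / std_normal_density b = exp ((b\<^sup>2 - x\<^sup>2)/2)"
    by (simp add: std_normal_density_def exp_diff[symmetric] diff_divide_distrib)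
  have key: "c * std_normal_density x / Q \<le> exp ((b\<^sup>2 - x\<^sup>2)/2)"
    if "0 \<le> c" "c \<le> 1" "std_normal_density b \<le> Q" for c Q
  proof -
    have Q: "0 < Q" using pb that by linarith
    have nx: "0 \<le> std_normal_density x" by simp
    have "c * std_normal_density x / Q \<le> std_normal_density x / Q"
      using that Q nx by (simp add: divide_right_mono mult_left_le_one_le)
    also have "\<dots> \<le> std_normal_density x / std_normal_density b"
      using that Q nx pb by (intro divide_left_mono) auto
    finally show ?thesis using r by simp
  qed
  show ?thesis
  proof (cases "l < x")
    case True
    then have "trunc_mix_density l p x = (p) * std_normal_density x / measure std_normal_measure {l<..}"
      by (simp add: trunc_mix_density_def)
    also have "\<dots> \<le> exp ((b\<^sup>2 - x\<^sup>2)/2)"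
      by (rule key) (use assms Q_lower[of l] in \<open>simp_all add: b_def\<close>)
    finally show ?thesis unfolding b_def .
  next
    case False
    then have "trunc_mix_density l p x = (1-p) * std_normal_density x / measure std_normal_measure {..l}"
      by (simp add: trunc_mix_density_def)
    also have "\<dots> \<le> exp ((b\<^sup>2 - x\<^sup>2)/2)"
      by (rule key) (use assms P_lower[of l] in \<open>simp_all add: b_def\<close>)
    finally show ?thesis unfolding b_def .
  qed
qed

lemma tmd_total:
  assumes "0 < p" "p < 1"
  shows "(\<integral>\<^sup>+x. ennreal (trunc_mix_density l p x) \<partial>lborel) = 1"
proof -
  interpret S: prob_space std_normal_measure by (rule snm_prob)
  define Q where "Q = measure std_normal_measure {l<..}"
  define P where "P = measure std_normal_measure {..l}"
  have Q: "0 < Q" using Q_lower[of l] snm_pos[of l] unfolding Q_def by linarith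
  have P: "0 < P" using P_lower[of l] snm_pos[of l] unfolding P_def by linarith
  have eQ: "(\<integral>\<^sup>+x. ennreal (std_normal_density x) * indicator {l<..} x \<partial>lborel) = ennreal Q"
  proof -
    have "emeasure std_normal_measure {l<..} = (\<integral>\<^sup>+x. ennreal (std_normal_density x) * indicator {l<..} x \<partial>lborel)"
      unfolding std_normal_measure_def by (simp add: emeasure_density)
    then show ?thesis unfolding Q_def using S.emeasure_eq_measure[of "{l<..}"] by simp
  qed
  have eP: "(\<integral>\<^sup>+x. ennreal (std_normal_density x) * indicator {..l} x \<partial>lborel) = ennreal P"
  proof -
    have "emeasure std_normal_measure {..l} = (\<integral>\<^sup>+x. ennreal (std_normal_density x) * indicator {..l} x \<partial>lborel)"
      unfolding std_normal_measure_def by (simp add: emeasure_density)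
    then show ?thesis unfolding P_def using S.emeasure_eq_measure[of "{..l}"] by simp
  qed
  have split: "ennreal (trunc_mix_density l p x) =
     ennreal (p/Q) * (ennreal (std_normal_density x) * indicator {l<..} x)
     + ennreal ((1-p)/P) * (ennreal (std_normal_density x) * indicator {..l} x)" for x
    using assms Q P
    by (cases "l < x") (auto simp: trunc_mix_density_def Q_def P_def indicator_def ennreal_mult[symmetric] mult.commute)
  have "(\<integral>\<^sup>+x. ennreal (trunc_mix_density l p x) \<partial>lborel)
      = ennreal (p/Q) * (\<integral>\<^sup>+x. ennreal (std_normal_density x) * indicator {l<..} x \<partial>lborel)
      + ennreal ((1-p)/P) * (\<integral>\<^sup>+x. ennreal (std_normal_density x) * indicator {..l} x \<partial>lborel)"
  proof -
    have m1: "(\<lambda>x. ennreal (std_normal_density x) * indicator {l<..} x) \<in> borel_measurable lborel" by measurable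
    have m2: "(\<lambda>x. ennreal (std_normal_density x) * indicator {..l} x) \<in> borel_measurable lborel" by measurable
    have m1': "(\<lambda>x. ennreal (p/Q) * (ennreal (std_normal_density x) * indicator {l<..} x)) \<in> borel_measurable lborel"
      using m1 by (rule borel_measurable_times_ennreal[OF borel_measurable_const])
    have m2': "(\<lambda>x. ennreal ((1-p)/P) * (ennreal (std_normal_density x) * indicator {..l} x)) \<in> borel_measurable lborel"
      using m2 by (rule borel_measurable_times_ennreal[OF borel_measurable_const])
    show ?thesis
      by (simp only: split, subst nn_integral_add[OF m1' m2'], subst nn_integral_cmult[OF m1], subst nn_integral_cmult[OF m2]) (rule refl)
  qed
  also have "\<dots> = ennreal p + ennreal (1-p)"
    unfolding eQ eP using Q P assms by (simp add: ennreal_mult[symmetric])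
  also have "\<dots> = 1" using assms by (simp add: ennreal_plus[symmetric] del: ennreal_plus)
  finally show ?thesis .
qed

lemma tmm_prob:
  assumes "0 < p" "p < 1"
  shows "prob_space (trunc_mix_measure l p)"
  by (rule prob_spaceI) (simp add: trunc_mix_measure_def emeasure_density tmd_total[OF assms])

lemma exp06: "exp (-0.6::real) \<ge> 1/2"
proof -
  have "0.8 \<le> exp (-0.2::real)" using exp_ge_add_one_self[of "-0.2::real"] by simp
  then have e2: "exp (0.2::real) \<le> 1.25" by (simp add: exp_minus field_simps)
  have "exp (0.6::real) = exp 0.2 ^ 3" using exp_of_nat_mult[of 3 "0.2::real"] by simp
  also have "\<dots> \<le> 1.25 ^ 3" using e2 by (intro power_mono) auto
  also have "\<dots> \<le> 2" by (simp add: power3_eq_cube)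
  finally have "exp (0.6::real) \<le> 2" .
  then show ?thesis by (simp add: exp_minus field_simps)
qed

lemma part1:
  assumes "0 < p" "p < 1" "t > 0"
  shows "measure (trunc_mix_measure l p) {x. \<bar>x\<bar> > t}
              \<le> 2 * exp (- t\<^sup>2 / (max (sqrt 20) (\<bar>l\<bar> * sqrt 10))\<^sup>2)"
proof -
  define K where "K = max (sqrt 20) (\<bar>l\<bar> * sqrt 10)"
  define k where "k = K\<^sup>2"
  define a where "a = \<bar>l\<bar>"
  define D where "D = (a+1)\<^sup>2"
  have k20: "k \<ge> 20"
  proof -
    have "sqrt 20 \<le> K" unfolding K_def by simp
    then have "(sqrt 20)\<^sup>2 \<le> K\<^sup>2" by (intro power_mono) auto
    then show ?thesis unfolding k_def by simp
  qed
  have ka: "k \<ge> 10 * a\<^sup>2"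
  proof -
    have "(a * sqrt 10)\<^sup>2 \<le> K\<^sup>2" unfolding K_def a_def by (intro power_mono) auto
    then show ?thesis unfolding k_def by (simp add: power_mult_distrib)
  qed
  have kpos: "k > 0" using k20 by simp
  interpret P: prob_space "trunc_mix_measure l p" by (rule tmm_prob[OF assms(1,2)])
  show ?thesis
  proof (cases "t\<^sup>2 \<le> 0.6 * k")
    case True
    have "t\<^sup>2 / k \<le> 0.6" using True kpos by (simp add: divide_le_eq)
    then have "exp (-0.6) \<le> exp (- t\<^sup>2 / k)" by simp
    then have "1 \<le> 2 * exp (- t\<^sup>2 / k)" using exp06 by linarith
    moreover have "measure (trunc_mix_measure l p) {x. \<bar>x\<bar> > t} \<le> 1" by (rule P.prob_le_1)
    ultimately have "measure (trunc_mix_measure l p) {x. \<bar>x\<bar> > t} \<le> 2 * exp (- t\<^sup>2 / k)" by linarith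
    then show ?thesis unfolding k_def K_def .
  next
    case False
    have h: "(a+1)\<^sup>2 + (a-1)\<^sup>2 = 2*a\<^sup>2+2" by (simp add: power2_eq_square algebra_simps)
    have "0 \<le> (a-1)\<^sup>2" by simp
    then have D2: "D \<le> 2*a\<^sup>2 + 2" unfolding D_def using h by linarith
    have E: "9/20 * t\<^sup>2 - D/2 - t\<^sup>2/k \<ge> 1.8"
    proof -
      have "t\<^sup>2/k \<le> t\<^sup>2/20" using k20 by (intro divide_left_mono) auto
      then show ?thesis using False D2 ka k20 by linarith
    qed
    define E where "E = 9/20 * t\<^sup>2 - D/2 - t\<^sup>2/k"
    have E0: "E \<ge> 1.8" using E E_def by simp
    have "1 + E + E\<^sup>2/2 \<le> exp E" using exp_lower_Taylor_quadratic[of E] E0 by simp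
    moreover have "E\<^sup>2 \<ge> (9/5)^2" using E0 by (intro power_mono) auto
    moreover have "((9/5)::real)^2 = 81/25" by (simp add: power2_eq_square)
    ultimately have eE: "exp E \<ge> 4" using E0 by linarith
    have spi: "sqrt (20*pi) \<le> 8"
    proof -
      have "20*pi \<le> 64" using pi_approx by simp
      then have "sqrt (20*pi) \<le> sqrt 64" by (rule real_sqrt_le_mono)
      then show ?thesis by simp
    qed
    have g: "(\<integral>\<^sup>+x. ennreal (exp (- x\<^sup>2 / 20)) \<partial>lborel) = ennreal (sqrt (20*pi))"
      using gauss_nn[of "sqrt 10"] by simp
    have "emeasure (trunc_mix_measure l p) {x. \<bar>x\<bar> > t}
        = (\<integral>\<^sup>+x. ennreal (trunc_mix_density l p x) * indicator {x. \<bar>x\<bar> > t} x \<partial>lborel)"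
    proof -
      have "open {x::real. t < \<bar>x\<bar>}" by (intro open_Collect_less) (auto intro: continuous_intros)
      then have ms: "{x::real. t < \<bar>x\<bar>} \<in> sets lborel" by simp
      show ?thesis unfolding trunc_mix_measure_def by (rule emeasure_density) (simp_all add: ms)
    qed
    also have "\<dots> \<le> (\<integral>\<^sup>+x. ennreal (exp (D/2 - 9/20 * t\<^sup>2)) * ennreal (exp (- x\<^sup>2 / 20)) \<partial>lborel)"
    proof (rule nn_integral_mono)
      fix x
      show "ennreal (trunc_mix_density l p x) * indicator {x. \<bar>x\<bar> > t} x
          \<le> ennreal (exp (D/2 - 9/20 * t\<^sup>2)) * ennreal (exp (- x\<^sup>2 / 20))"
      proof (cases "\<bar>x\<bar> > t")
        case True
        have "t\<^sup>2 \<le> \<bar>x\<bar>\<^sup>2" using True assms(3) by (intro power_mono) auto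
        then have "t\<^sup>2 \<le> x\<^sup>2" by simp
        then have "(D - x\<^sup>2)/2 \<le> (D/2 - 9/20 * t\<^sup>2) + (- x\<^sup>2 / 20)" by simp
        then have "exp ((D - x\<^sup>2)/2) \<le> exp (D/2 - 9/20 * t\<^sup>2) * exp (- x\<^sup>2 / 20)"
          by (simp only: exp_add[symmetric] exp_le_cancel_iff)
        then have "trunc_mix_density l p x \<le> exp (D/2 - 9/20 * t\<^sup>2) * exp (- x\<^sup>2 / 20)"
          using tmd_bound[OF assms(1,2), of l x] unfolding D_def a_def by linarith
        then have "ennreal (trunc_mix_density l p x) \<le> ennreal (exp (D/2 - 9/20 * t\<^sup>2) * exp (- x\<^sup>2 / 20))"
          by (rule ennreal_leI)
        then show ?thesis using True by (simp add: ennreal_mult)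
      qed simp
    qed
    also have "\<dots> = ennreal (exp (D/2 - 9/20 * t\<^sup>2)) * ennreal (sqrt (20*pi))"
      using g by (simp add: nn_integral_cmult)
    also have "\<dots> = ennreal (exp (D/2 - 9/20 * t\<^sup>2) * sqrt (20*pi))"
      by (simp add: ennreal_mult[symmetric])
    also have "\<dots> \<le> ennreal (2 * exp (- t\<^sup>2 / k))"
    proof (rule ennreal_leI)
      have "exp (D/2 - 9/20 * t\<^sup>2) = exp (- t\<^sup>2 / k) * exp (- E)"
        unfolding E_def by (simp add: exp_add[symmetric])
      moreover have "exp (- E) * sqrt (20*pi) \<le> 2"
        using eE spi by (simp add: exp_minus field_simps)
      ultimately show "exp (D/2 - 9/20 * t\<^sup>2) * sqrt (20*pi) \<le> 2 * exp (- t\<^sup>2 / k)"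
      proof -
        have "exp (- t\<^sup>2 / k) * (exp (- E) * sqrt (20*pi)) \<le> exp (- t\<^sup>2 / k) * 2"
          using \<open>exp (- E) * sqrt (20*pi) \<le> 2\<close> by (intro mult_left_mono) auto
        then show ?thesis using \<open>exp (D/2 - 9/20 * t\<^sup>2) = exp (- t\<^sup>2 / k) * exp (- E)\<close>
          by (simp add: ac_simps)
      qed
    qed
    finally have "emeasure (trunc_mix_measure l p) {x. \<bar>x\<bar> > t} \<le> ennreal (2 * exp (- t\<^sup>2 / k))" .
    then have "ennreal (measure (trunc_mix_measure l p) {x. \<bar>x\<bar> > t}) \<le> ennreal (2 * exp (- t\<^sup>2 / k))"
      by (simp only: P.emeasure_eq_measure)
    then have "measure (trunc_mix_measure l p) {x. \<bar>x\<bar> > t} \<le> 2 * exp (- t\<^sup>2 / k)"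
      by (subst (asm) ennreal_le_iff) auto
    then show ?thesis unfolding k_def K_def .
  qed
qed


lemma ineqA: "1 \<le> D \<Longrightarrow> (z::real) \<le> y / 196 \<Longrightarrow> \<not> y \<le> 48 * D \<Longrightarrow> (D - y)/2 + z \<le> -11/2*D + - (y / 8)"
  by (simp add: field_simps)

lemma exp14: "exp (1/4::real) \<le> 4/3"
proof -
  have "3/4 \<le> exp (-1/4::real)" using exp_ge_add_one_self[of "-1/4::real"] by simp
  then show ?thesis by (simp add: exp_minus field_simps)
qed

lemma part2:
  assumes "0 < p" "p < 1"
  shows "psi2_norm (trunc_mix_measure l p) \<le> 28 * max 1 \<bar>l\<bar>"
proof -
  define a where "a = \<bar>l\<bar>"
  define D where "D = (a+1)\<^sup>2"
  define s where "s = 14 * (a+1)"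
  have a0: "0 \<le> a" unfolding a_def by simp
  have D1: "1 \<le> D" unfolding D_def using a0 by (simp add: one_le_power)
  have spos: "0 < s" unfolding s_def using a0 by simp
  have s2: "s\<^sup>2 = 196 * D" unfolding s_def D_def by (simp add: power2_eq_square algebra_simps)
  have g8: "(\<integral>\<^sup>+x. ennreal (exp (- x\<^sup>2 / (2*2\<^sup>2))) \<partial>lborel) = ennreal (sqrt (2*pi*2\<^sup>2))"
    by (rule gauss_nn) simp
  have real: "exp (1/4) + exp (-11/2*D) * sqrt (2*pi*2\<^sup>2) \<le> 2"
  proof -
    have "1 + 11/2 + (11/2)\<^sup>2/2 \<le> exp (11/2::real)" by (rule exp_lower_Taylor_quadratic) simp
    then have e1: "18 \<le> exp (11/2::real)" by (simp add: power2_eq_square)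
    have "exp (-11/2*D) \<le> exp (-11/2)" using D1 by simp
    also have "\<dots> \<le> 1/18" using e1 by (simp add: exp_minus field_simps)
    finally have e2: "exp (-11/2*D) \<le> 1/18" .
    have "2*pi*2\<^sup>2 \<le> (36::real)" using pi_approx by simp
    then have "sqrt (2*pi*2\<^sup>2) \<le> sqrt 36" by (rule real_sqrt_le_mono)
    then have sq: "sqrt (2*pi*2\<^sup>2) \<le> 6" by simp
    have "exp (-11/2*D) * sqrt (2*pi*2\<^sup>2) \<le> 1/18 * 6"
      using e2 sq by (intro mult_mono) auto
    then show ?thesis using exp14 by simp
  qed
  have int: "(\<integral>\<^sup>+x. ennreal (exp (x\<^sup>2 / s\<^sup>2)) \<partial>trunc_mix_measure l p) \<le> 2"
  proof -
    have "(\<integral>\<^sup>+x. ennreal (exp (x\<^sup>2 / s\<^sup>2)) \<partial>trunc_mix_measure l p)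
        = (\<integral>\<^sup>+x. ennreal (trunc_mix_density l p x) * ennreal (exp (x\<^sup>2 / s\<^sup>2)) \<partial>lborel)"
      unfolding trunc_mix_measure_def by (rule nn_integral_density; measurable)
    also have "\<dots> \<le> (\<integral>\<^sup>+x. ennreal (exp (1/4)) * ennreal (trunc_mix_density l p x)
            + ennreal (exp (-11/2*D)) * ennreal (exp (- x\<^sup>2 / (2*2\<^sup>2))) \<partial>lborel)"
    proof (rule nn_integral_mono)
      fix x
      define f where "f = trunc_mix_density l p x"
      have f0: "0 \<le> f" unfolding f_def by (rule tmd_nonneg[OF assms])
      have "f * exp (x\<^sup>2 / s\<^sup>2) \<le> exp (1/4) * f + exp (-11/2*D) * exp (- x\<^sup>2 / (2*2\<^sup>2))"
      proof (cases "x\<^sup>2 \<le> 48 * D")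
        case True
        have "x\<^sup>2 / s\<^sup>2 \<le> 1/4" using True s2 D1 by (simp add: divide_le_eq)
        then have "exp (x\<^sup>2 / s\<^sup>2) \<le> exp (1/4)" by simp
        then have "f * exp (x\<^sup>2 / s\<^sup>2) \<le> f * exp (1/4)" using f0 by (rule mult_left_mono)
        moreover have "f * exp (1/4) = exp (1/4) * f" by (rule mult.commute)
        moreover have "0 \<le> exp (-11/2*D) * exp (- x\<^sup>2 / (2*2\<^sup>2))" by simp
        ultimately show ?thesis by linarith
      next
        case False
        have "x\<^sup>2 / s\<^sup>2 \<le> x\<^sup>2 / 196" using s2 D1 by (intro divide_left_mono) auto
        then have ex: "(D - x\<^sup>2)/2 + x\<^sup>2 / s\<^sup>2 \<le> -11/2*D + - x\<^sup>2 / (2*2\<^sup>2)"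
          using ineqA[of D "x\<^sup>2 / s\<^sup>2" "x\<^sup>2"] D1 False by simp
        have "f * exp (x\<^sup>2 / s\<^sup>2) \<le> exp ((D - x\<^sup>2)/2) * exp (x\<^sup>2 / s\<^sup>2)"
          using tmd_bound[OF assms, of l x] unfolding f_def D_def a_def by (intro mult_right_mono) auto
        also have "\<dots> = exp ((D - x\<^sup>2)/2 + x\<^sup>2 / s\<^sup>2)" by (simp only: exp_add)
        also have "\<dots> \<le> exp (-11/2*D + - x\<^sup>2 / (2*2\<^sup>2))" using ex by (simp only: exp_le_cancel_iff)
        also have "\<dots> = exp (-11/2*D) * exp (- x\<^sup>2 / (2*2\<^sup>2))" by (simp only: exp_add)
        finally have "f * exp (x\<^sup>2 / s\<^sup>2) \<le> exp (-11/2*D) * exp (- x\<^sup>2 / (2*2\<^sup>2))" .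
        moreover have "0 \<le> exp (1/4) * f" using f0 by simp
        ultimately show ?thesis by linarith
      qed
      then have "ennreal (f * exp (x\<^sup>2 / s\<^sup>2)) \<le> ennreal (exp (1/4) * f + exp (-11/2*D) * exp (- x\<^sup>2 / (2*2\<^sup>2)))"
        by (rule ennreal_leI)
      then show "ennreal (trunc_mix_density l p x) * ennreal (exp (x\<^sup>2 / s\<^sup>2))
          \<le> ennreal (exp (1/4)) * ennreal (trunc_mix_density l p x)
            + ennreal (exp (-11/2*D)) * ennreal (exp (- x\<^sup>2 / (2*2\<^sup>2)))"
      proof -
        have A: "ennreal (f * exp (x\<^sup>2 / s\<^sup>2)) = ennreal f * ennreal (exp (x\<^sup>2 / s\<^sup>2))"
          using f0 by (intro ennreal_mult) auto
        have B: "ennreal (exp (1/4) * f + exp (-11/2*D) * exp (- x\<^sup>2 / (2*2\<^sup>2)))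
            = ennreal (exp (1/4) * f) + ennreal (exp (-11/2*D) * exp (- x\<^sup>2 / (2*2\<^sup>2)))"
          using f0 by (intro ennreal_plus) auto
        have C: "ennreal (exp (1/4) * f) = ennreal (exp (1/4)) * ennreal f"
          using f0 by (intro ennreal_mult) auto
        have E: "ennreal (exp (-11/2*D) * exp (- x\<^sup>2 / (2*2\<^sup>2))) = ennreal (exp (-11/2*D)) * ennreal (exp (- x\<^sup>2 / (2*2\<^sup>2)))"
          by (intro ennreal_mult) auto
        have "ennreal f * ennreal (exp (x\<^sup>2 / s\<^sup>2)) \<le> ennreal (exp (1/4)) * ennreal f
            + ennreal (exp (-11/2*D)) * ennreal (exp (- x\<^sup>2 / (2*2\<^sup>2)))"
          using \<open>ennreal (f * exp (x\<^sup>2 / s\<^sup>2)) \<le> _\<close> unfolding A B C E .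
        then show ?thesis unfolding f_def .
      qed
    qed
    also have "\<dots> = ennreal (exp (1/4)) * (\<integral>\<^sup>+x. ennreal (trunc_mix_density l p x) \<partial>lborel)
            + ennreal (exp (-11/2*D)) * (\<integral>\<^sup>+x. ennreal (exp (- x\<^sup>2 / (2*2\<^sup>2))) \<partial>lborel)"
    proof -
      have m3: "(\<lambda>x. ennreal (trunc_mix_density l p x)) \<in> borel_measurable lborel" by measurable
      have m4: "(\<lambda>x. ennreal (exp (- x\<^sup>2 / (2*2\<^sup>2)))) \<in> borel_measurable lborel" by measurable
      have m1: "(\<lambda>x. ennreal (exp (1/4)) * ennreal (trunc_mix_density l p x)) \<in> borel_measurable lborel"
        using m3 by (rule borel_measurable_times_ennreal[OF borel_measurable_const])
      have m2: "(\<lambda>x. ennreal (exp (-11/2*D)) * ennreal (exp (- x\<^sup>2 / (2*2\<^sup>2)))) \<in> borel_measurable lborel"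
        using m4 by (rule borel_measurable_times_ennreal[OF borel_measurable_const])
      show ?thesis
        by (subst nn_integral_add[OF m1 m2], subst nn_integral_cmult[OF m3], subst nn_integral_cmult[OF m4]) (rule refl)
    qed
    also have "\<dots> = ennreal (exp (1/4)) + ennreal (exp (-11/2*D)) * ennreal (sqrt (2*pi*2\<^sup>2))"
      by (simp only: g8 tmd_total[OF assms] mult_1_right)
    also have "\<dots> = ennreal (exp (1/4) + exp (-11/2*D) * sqrt (2*pi*2\<^sup>2))"
    proof -
      have "ennreal (exp (1/4) + exp (-11/2*D) * sqrt (2*pi*2\<^sup>2)) = ennreal (exp (1/4)) + ennreal (exp (-11/2*D) * sqrt (2*pi*2\<^sup>2))"
        by (intro ennreal_plus) auto
      also have "ennreal (exp (-11/2*D) * sqrt (2*pi*2\<^sup>2)) = ennreal (exp (-11/2*D)) * ennreal (sqrt (2*pi*2\<^sup>2))"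
        by (intro ennreal_mult) auto
      finally show ?thesis by simp
    qed
    also have "\<dots> \<le> ennreal 2" using real by (rule ennreal_leI)
    finally show ?thesis by simp
  qed
  have "psi2_norm (trunc_mix_measure l p) \<le> s"
    unfolding psi2_norm_def
  proof (rule cInf_lower)
    show "s \<in> {t. 0 < t \<and> (\<integral>\<^sup>+x. ennreal (exp (x\<^sup>2 / t\<^sup>2)) \<partial>trunc_mix_measure l p) \<le> 2}"
      using spos int by simp
    show "bdd_below {t::real. 0 < t \<and> (\<integral>\<^sup>+x. ennreal (exp (x\<^sup>2 / t\<^sup>2)) \<partial>trunc_mix_measure l p) \<le> 2}"
      by (rule bdd_belowI[of _ 0]) simp
  qed
  also have "s \<le> 28 * max 1 \<bar>l\<bar>"
  proof -
    have "14 * (a + 1) \<le> 28 * max 1 a" by (simp add: max_def)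
    then show ?thesis unfolding s_def a_def .
  qed
  finally show ?thesis .
qed

theorem lemma18:
  shows "(\<forall>(l::real) (p::real) (t::real). 0 < p \<and> p < 1 \<and> t > 0 \<longrightarrow>
            measure (trunc_mix_measure l p) {x. \<bar>x\<bar> > t}
              \<le> 2 * exp (- t\<^sup>2 / (max (sqrt 20) (\<bar>l\<bar> * sqrt 10))\<^sup>2))
       \<and> (\<exists>C::real. \<forall>(l::real) (p::real). 0 < p \<and> p < 1 \<longrightarrow>
            psi2_norm (trunc_mix_measure l p) \<le> C * max 1 \<bar>l\<bar>)"
proof (intro conjI)
  show "\<forall>(l::real) (p::real) (t::real). 0 < p \<and> p < 1 \<and> t > 0 \<longrightarrow>
            measure (trunc_mix_measure l p) {x. \<bar>x\<bar> > t}
              \<le> 2 * exp (- t\<^sup>2 / (max (sqrt 20) (\<bar>l\<bar> * sqrt 10))\<^sup>2)"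
  proof (intro allI impI)
    fix l p t :: real
    assume h: "0 < p \<and> p < 1 \<and> t > 0"
    show "measure (trunc_mix_measure l p) {x. \<bar>x\<bar> > t}
              \<le> 2 * exp (- t\<^sup>2 / (max (sqrt 20) (\<bar>l\<bar> * sqrt 10))\<^sup>2)"
      by (rule part1) (use h in auto)
  qed
  show "\<exists>C::real. \<forall>(l::real) (p::real). 0 < p \<and> p < 1 \<longrightarrow>
            psi2_norm (trunc_mix_measure l p) \<le> C * max 1 \<bar>l\<bar>"
  proof (rule exI[of _ 28], intro allI impI)
    fix l p :: real
    assume h: "0 < p \<and> p < 1"
    show "psi2_norm (trunc_mix_measure l p) \<le> 28 * max 1 \<bar>l\<bar>"
      by (rule part2) (use h in auto)
  qed
qed

end
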